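(* Let $(\widetilde{M},\tilde g)$ be a Riemannian manifold endowed with an anti-torqued vector field $V$, and let $M$ be a hypersurface of $\widetilde{M}$ such that the tangential component of $V$ along $M$ vanishes identically. Then $M$ is totally umbilical in $\widetilde{M}$. (That is, the totally umbilical hypersurfaces are the only hypersurfaces of $\widetilde{M}$ on which the tangential component of $V$ vanishes identically.)
   Context: $\widetilde{\nabla}$ is the Levi-Civita connection of $\widetilde{M}$. A non-vanishing vector field $V$ is anti-torqued if there is a smooth function $f$ with $\widetilde{\nabla}_X V=f\,(X-\tilde g(X,V)V)$ for all vector fields $X$ on $\widetilde{M}$. A submanifold is totally umbilical if for every normal vector $\xi$ the shape operator satisfies $A_\xi=\mu\,\mathrm{Id}$ for some function $\mu$. *)

theory Defs
  imports "HOL-Analysis.Analysis"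
begin

text \<open>Local-coordinate model of Riemannian geometry. A Riemannian manifold is
modelled by an open coordinate domain U in R^n (type real^'n) together with a
smooth field G of symmetric positive definite matrices (the metric tensor
g_ij). Hypersurfaces are modelled by local parametrizations (immersions)
phi : W \<subseteq> R^m \<rightarrow> U with n = m + 1.\<close>

text \<open>Directional (Frechet) derivative of f at x in direction v.\<close>
definition D :: "('a::real_normed_vector \<Rightarrow> 'b::real_normed_vector) \<Rightarrow> 'a \<Rightarrow> 'a \<Rightarrow> 'b" where
  "D f x v = frechet_derivative f (at x) v"

text \<open>C^k on an open set: continuous, and (for k+1) differentiable with all
directional derivatives C^k. Smooth = C^k for all k.\<close>
fun Ck_on :: "nat \<Rightarrow> ('a::euclidean_space \<Rightarrow> 'b::euclidean_space) \<Rightarrow> 'a set \<Rightarrow> bool" where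
  "Ck_on 0 f S = continuous_on S f"
| "Ck_on (Suc k) f S = (f differentiable_on S \<and> (\<forall>v. Ck_on k (\<lambda>x. D f x v) S))"

definition smooth_on :: "('a::euclidean_space \<Rightarrow> 'b::euclidean_space) \<Rightarrow> 'a set \<Rightarrow> bool" where
  "smooth_on f S = (\<forall>k. Ck_on k f S)"

text \<open>Riemannian metric given by the matrix field G.\<close>
definition riem_metric :: "(real^'n \<Rightarrow> real^'n^'n) \<Rightarrow> (real^'n) set \<Rightarrow> bool" where
  "riem_metric G U \<longleftrightarrow> open U \<and> smooth_on G U \<and>
     (\<forall>p\<in>U. transpose (G p) = G p \<and> (\<forall>x. x \<noteq> 0 \<longrightarrow> x \<bullet> (G p *v x) > 0))"

definition gmet :: "(real^'n \<Rightarrow> real^'n^'n) \<Rightarrow> real^'n \<Rightarrow> real^'n \<Rightarrow> real^'n \<Rightarrow> real" where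
  "gmet G p x y = x \<bullet> (G p *v y)"

text \<open>Christoffel symbols of the Levi-Civita connection, as the bilinear map
Gamma_p(x,y) characterised by
g(Gamma(x,y), z) = 1/2 (d_x g(y,z) + d_y g(x,z) - d_z g(x,y)).\<close>
definition christoffel :: "(real^'n \<Rightarrow> real^'n^'n) \<Rightarrow> real^'n \<Rightarrow> real^'n \<Rightarrow> real^'n \<Rightarrow> real^'n" where
  "christoffel G p x y = (1/2) *\<^sub>R (matrix_inv (G p) *v
     (\<chi> l. y \<bullet> (D G p x *v axis l 1) + x \<bullet> (D G p y *v axis l 1)
           - x \<bullet> (D G p (axis l 1) *v y)))"

text \<open>Levi-Civita covariant derivative of the vector field V in direction X at p.\<close>
definition levi_civita :: "(real^'n \<Rightarrow> real^'n^'n) \<Rightarrow> real^'n \<Rightarrow> real^'n \<Rightarrow> (real^'n \<Rightarrow> real^'n) \<Rightarrow> real^'n" where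
  "levi_civita G p X V = D V p X + christoffel G p X (V p)"

text \<open>Anti-torqued vector field: non-vanishing, and there is a smooth f with
nabla_X V = f (X - g(X,V) V) for all X.\<close>
definition anti_torqued :: "(real^'n \<Rightarrow> real^'n^'n) \<Rightarrow> (real^'n) set \<Rightarrow> (real^'n \<Rightarrow> real^'n) \<Rightarrow> bool" where
  "anti_torqued G U V \<longleftrightarrow> smooth_on V U \<and> (\<forall>p\<in>U. V p \<noteq> 0) \<and>
     (\<exists>f::real^'n \<Rightarrow> real. smooth_on f U \<and>
        (\<forall>p\<in>U. \<forall>X. levi_civita G p X V = f p *\<^sub>R (X - gmet G p X (V p) *\<^sub>R V p)))"

text \<open>Local parametrized hypersurface phi : W \<rightarrow> U (injective smooth immersion,
W open in R^m, n = m + 1).\<close>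
definition hypersurface_param :: "(real^'n) set \<Rightarrow> (real^'m) set \<Rightarrow> (real^'m \<Rightarrow> real^'n) \<Rightarrow> bool" where
  "hypersurface_param U W phi \<longleftrightarrow> CARD('n) = CARD('m) + 1 \<and> open W \<and>
     smooth_on phi W \<and> phi ` W \<subseteq> U \<and> inj_on phi W \<and> (\<forall>w\<in>W. inj (D phi w))"

text \<open>Normal vectors to the hypersurface at the point phi w.\<close>
definition normal_vec :: "(real^'n \<Rightarrow> real^'n^'n) \<Rightarrow> (real^'m \<Rightarrow> real^'n) \<Rightarrow> real^'m \<Rightarrow> real^'n \<Rightarrow> bool" where
  "normal_vec G phi w \<xi> \<longleftrightarrow> (\<forall>u. gmet G (phi w) \<xi> (D phi w u) = 0)"

text \<open>Ambient covariant derivative of the tangent field d phi(v) along d phi(u):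
its normal component is the second fundamental form h(u,v).\<close>
definition amb_hess :: "(real^'n \<Rightarrow> real^'n^'n) \<Rightarrow> (real^'m \<Rightarrow> real^'n) \<Rightarrow> real^'m \<Rightarrow> real^'m \<Rightarrow> real^'m \<Rightarrow> real^'n" where
  "amb_hess G phi w u v = D (\<lambda>w'. D phi w' v) w u + christoffel G (phi w) (D phi w u) (D phi w v)"

text \<open>Shape operator A_xi (in the coordinates of the parametrization), defined by
g(A_xi X, Y) = g(h(X,Y), xi), i.e. A_xi = I^-1 B_xi with I the first fundamental
form matrix and B_xi the matrix of g(h(.,.),xi).\<close>
definition shape_op :: "(real^'n \<Rightarrow> real^'n^'n) \<Rightarrow> (real^'m \<Rightarrow> real^'n) \<Rightarrow> real^'m \<Rightarrow> real^'n \<Rightarrow> real^'m \<Rightarrow> real^'m" where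
  "shape_op G phi w \<xi> u =
     matrix_inv (\<chi> i j. gmet G (phi w) (D phi w (axis i 1)) (D phi w (axis j 1)))
     *v ((\<chi> i j. gmet G (phi w) (amb_hess G phi w (axis i 1) (axis j 1)) \<xi>) *v u)"

definition totally_umbilical :: "(real^'n \<Rightarrow> real^'n^'n) \<Rightarrow> (real^'m) set \<Rightarrow> (real^'m \<Rightarrow> real^'n) \<Rightarrow> bool" where
  "totally_umbilical G W phi \<longleftrightarrow>
     (\<forall>w\<in>W. \<forall>\<xi>. normal_vec G phi w \<xi> \<longrightarrow> (\<exists>\<mu>::real. \<forall>u. shape_op G phi w \<xi> u = \<mu> *\<^sub>R u))"

text \<open>Tangential component of V along the hypersurface vanishes: V is normal.\<close>
definition tangential_vanishes :: "(real^'n \<Rightarrow> real^'n^'n) \<Rightarrow> (real^'m) set \<Rightarrow> (real^'m \<Rightarrow> real^'n) \<Rightarrow> (real^'n \<Rightarrow> real^'n) \<Rightarrow> bool" where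
  "tangential_vanishes G W phi V \<longleftrightarrow> (\<forall>w\<in>W. normal_vec G phi w (V (phi w)))"

end

theory Submission
  imports Defs
begin

lemma smooth_diff:
  assumes "smooth_on f S" "open S" "x \<in> S"
  shows "f differentiable (at x)"
proof -
  have "Ck_on 1 f S" using assms(1) unfolding smooth_on_def by blast
  then show ?thesis using assms differentiable_on_eq_differentiable_at by auto
qed

lemma smooth_diff2:
  assumes "smooth_on f S" "open S" "x \<in> S"
  shows "(\<lambda>y. D f y v) differentiable (at x)"
proof -
  have "Ck_on 2 f S" using assms(1) unfolding smooth_on_def by blast
  then have "Ck_on 1 (\<lambda>y. D f y v) S" by (simp add: numeral_2_eq_2)
  then show ?thesis using assms differentiable_on_eq_differentiable_at by auto
qed

lemma D_has: "f differentiable (at x) \<Longrightarrow> (f has_derivative D f x) (at x)"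
  unfolding D_def using frechet_derivative_works by metis

lemma D_linear: "f differentiable (at x) \<Longrightarrow> linear (D f x)"
  using D_has has_derivative_linear by blast

lemma bb_mv: "bounded_bilinear ((*v) :: real^'n^'m \<Rightarrow> real^'n \<Rightarrow> real^'m)"
  unfolding bilinear_conv_bounded_bilinear[symmetric] bilinear_def
  by (auto intro!: linearI simp:
      vec_eq_iff matrix_vector_mult_def sum_distrib_left algebra_simps sum.distrib)

lemma inv_props:
  fixes A :: "real^'n^'n"
  assumes "\<And>x. A *v x = 0 \<Longrightarrow> x = 0"
  shows "A ** matrix_inv A = mat 1" "matrix_inv A ** A = mat 1"
proof -
  have "invertible A" using assms matrix_left_invertible_ker invertible_left_inverse by metis
  then have "\<exists>A'. A ** A' = mat 1 \<and> A' ** A = mat 1" unfolding invertible_def by blast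
  then have "A ** matrix_inv A = mat 1 \<and> matrix_inv A ** A = mat 1"
    unfolding matrix_inv_def by (rule someI_ex)
  then show "A ** matrix_inv A = mat 1" "matrix_inv A ** A = mat 1" by auto
qed

lemma lin_expand:
  fixes F :: "real^'n \<Rightarrow> real"
  assumes "linear F"
  shows "(\<Sum>l\<in>UNIV. z$l * F (axis l 1)) = F z"
proof -
  have "F z = F (\<Sum>l\<in>UNIV. (z$l) *s axis l 1)" by (simp add: basis_expansion)
  also have "\<dots> = (\<Sum>l\<in>UNIV. z$l * F (axis l 1))"
    by (simp add: scalar_mult_eq_scaleR linear_sum[OF assms] linear_scale[OF assms] o_def)
  finally show ?thesis by simp
qed

lemma sym_inner:
  assumes "transpose M = (M::real^'n^'n)"
  shows "u \<bullet> (M *v v) = v \<bullet> (M *v u)"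
proof -
  have "u \<bullet> (M *v v) = (u v* M) \<bullet> v" by (simp add: dot_lmul_matrix)
  also have "u v* M = transpose M *v u" by simp
  finally show ?thesis using assms by (simp add: inner_commute)
qed


lemma DG_sym:
  fixes G :: "real^'n \<Rightarrow> real^'n^'n"
  assumes "riem_metric G U" "p \<in> U"
  shows "transpose (D G p x) = D G p x"
proof -
  have U: "open U" "smooth_on G U" and sy: "\<And>q. q \<in> U \<Longrightarrow> transpose (G q) = G q"
    using assms unfolding riem_metric_def by auto
  have dG: "(G has_derivative D G p) (at p)" using D_has smooth_diff U assms(2) by blast
  have bl: "\<And>i j. bounded_linear (\<lambda>A::real^'n^'n. A $ i $ j)"
    using bounded_linear_compose[OF bounded_linear_vec_nth bounded_linear_vec_nth] by blast
  have comp: "\<And>i j. ((\<lambda>q. G q $ i $ j) has_derivative (\<lambda>h. D G p h $ i $ j)) (at p)"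
    using bounded_linear.has_derivative[OF bl dG] by blast
  have "\<And>i j. (\<lambda>h. D G p h $ i $ j) = (\<lambda>h. D G p h $ j $ i)"
  proof -
    fix i j
    have "((\<lambda>q. G q $ j $ i) has_derivative (\<lambda>h. D G p h $ i $ j)) (at p)"
    proof (rule has_derivative_transform_within_open[OF comp U(1) assms(2)])
      fix q assume "q \<in> U"
      then have "transpose (G q) $ j $ i = G q $ j $ i" using sy by simp
      then show "G q $ i $ j = G q $ j $ i" by (simp add: transpose_def)
    qed
    then show "(\<lambda>h. D G p h $ i $ j) = (\<lambda>h. D G p h $ j $ i)"
      using comp has_derivative_unique by blast
  qed
  then show ?thesis by (simp add: vec_eq_iff transpose_def fun_eq_iff)
qed

lemma metric_compat:
  fixes G :: "real^'n \<Rightarrow> real^'n^'n"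
  assumes sym: "transpose (G p) = G p"
    and inv: "G p ** matrix_inv (G p) = mat 1"
    and lin: "linear (D G p)"
    and dsym: "\<And>h. transpose (D G p h) = D G p h"
  shows "christoffel G p x y \<bullet> (G p *v z) + christoffel G p x z \<bullet> (G p *v y)
         = y \<bullet> (D G p x *v z)"
proof -
  define A where "A = D G p"
  define c where "c = (\<lambda>x y. (\<chi> l. y \<bullet> (A x *v axis l 1) + x \<bullet> (A y *v axis l 1)
           - x \<bullet> (A (axis l 1) *v y)) :: real^'n)"
  have key: "(matrix_inv (G p) *v a) \<bullet> (G p *v b) = a \<bullet> b" for a b
  proof -
    have "(matrix_inv (G p) *v a) \<bullet> (G p *v b) = b \<bullet> (G p *v (matrix_inv (G p) *v a))"
      using sym_inner[OF sym, of "matrix_inv (G p) *v a" b] by (simp add: inner_commute)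
    also have "\<dots> = b \<bullet> a" by (simp add: matrix_vector_mul_assoc inv)
    finally show ?thesis by (simp add: inner_commute)
  qed
  have linA: "linear A" using lin A_def by simp
  have l1: "linear (\<lambda>e. y \<bullet> (M *v e))" for y and M :: "real^'n^'n"
    by (intro linearI) (simp_all add: matrix_vector_right_distrib inner_add_right matrix_vector_mult_scaleR)
  have l2: "linear (\<lambda>e. x \<bullet> (A e *v y))" for x y
    using linA by (intro linearI) (simp_all add: linear_add linear_scale matrix_vector_mult_add_rdistrib inner_add_right
        vec_eq_iff matrix_vector_mult_def sum_distrib_left inner_vec_def algebra_simps sum.distrib)
  have cz: "c x y \<bullet> z = y \<bullet> (A x *v z) + x \<bullet> (A y *v z) - x \<bullet> (A z *v y)" for x y z
  proof -
    have "c x y \<bullet> z = (\<Sum>l\<in>UNIV. z$l * (y \<bullet> (A x *v axis l 1)) + z$l * (x \<bullet> (A y *v axis l 1))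
           - z$l * (x \<bullet> (A (axis l 1) *v y)))"
      unfolding c_def inner_vec_def by (simp add: algebra_simps)
    also have "\<dots> = y \<bullet> (A x *v z) + x \<bullet> (A y *v z) - x \<bullet> (A z *v y)"
      by (simp add: sum.distrib sum_subtractf lin_expand[OF l1] lin_expand[OF l2])
    finally show ?thesis .
  qed
  have chr: "christoffel G p x y = (1/2) *\<^sub>R (matrix_inv (G p) *v c x y)" for x y
    unfolding christoffel_def c_def A_def by simp
  have s2: "z \<bullet> (A x *v y) = y \<bullet> (A x *v z)"
    using sym_inner[of "A x"] dsym A_def by simp
  show ?thesis
    unfolding chr inner_scaleR_left key cz A_def[symmetric] using s2 by (simp add: algebra_simps)
qed


lemma scale_mv: "((k::real) *\<^sub>R (M::real^'n^'m)) *v u = k *\<^sub>R (M *v u)"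
  by (simp add: vec_eq_iff matrix_vector_mult_def sum_distrib_left algebra_simps)

theorem corollary4p2:
  fixes G :: "real^'n \<Rightarrow> real^'n^'n" and U :: "(real^'n) set"
    and V :: "real^'n \<Rightarrow> real^'n"
    and W :: "(real^'m) set" and phi :: "real^'m \<Rightarrow> real^'n"
  assumes "riem_metric G U"
    and "anti_torqued G U V"
    and "hypersurface_param U W phi"
    and "tangential_vanishes G W phi V"
  shows "totally_umbilical G W phi"
proof -
  have oU: "open U" and sG: "smooth_on G U" and sym: "\<And>q. q \<in> U \<Longrightarrow> transpose (G q) = G q"
    and pd: "\<And>q x. q \<in> U \<Longrightarrow> x \<noteq> 0 \<Longrightarrow> x \<bullet> (G q *v x) > 0"
    using assms(1) unfolding riem_metric_def by auto
  obtain f where sV: "smooth_on V U" and V0: "\<And>q. q \<in> U \<Longrightarrow> V q \<noteq> 0"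
    and LC: "\<And>q X. q \<in> U \<Longrightarrow> levi_civita G q X V = f q *\<^sub>R (X - gmet G q X (V q) *\<^sub>R V q)"
    using assms(2) unfolding anti_torqued_def by blast
  have card: "CARD('n) = CARD('m) + 1" and oW: "open W" and sphi: "smooth_on phi W"
    and phiU: "phi ` W \<subseteq> U" and injD: "\<And>w. w \<in> W \<Longrightarrow> inj (D phi w)"
    using assms(3) unfolding hypersurface_param_def by auto
  have tv: "\<And>w u. w \<in> W \<Longrightarrow> gmet G (phi w) (V (phi w)) (D phi w u) = 0"
    using assms(4) unfolding tangential_vanishes_def normal_vec_def by blast
  show ?thesis unfolding totally_umbilical_def
  proof (intro ballI allI impI)
    fix w \<xi> assume w: "w \<in> W" and \<xi>: "normal_vec G phi w \<xi>"
    define p where "p = phi w"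
    have pU: "p \<in> U" using p_def w phiU by blast
    define N where "N = V p"
    have N0: "N \<noteq> 0" using V0 pU N_def by simp
    define P where "P = G p"
    have Psym: "transpose P = P" using sym pU P_def by simp
    have gsym: "\<And>a b. gmet G p a b = gmet G p b a"
      unfolding gmet_def P_def[symmetric] using sym_inner[OF Psym] by simp
    have Pinj: "\<And>x. P *v x = 0 \<Longrightarrow> x = 0"
      using pd[OF pU] P_def by (metis inner_zero_right less_irrefl)
    have Pinv: "P ** matrix_inv P = mat 1" using inv_props[OF Pinj] by blast
    have dphi: "phi differentiable (at w)" using smooth_diff sphi oW w by blast
    have linD: "linear (D phi w)" using D_linear dphi by blast
    have dGd: "G differentiable (at p)" using smooth_diff sG oU pU by blast
    have dVd: "V differentiable (at p)" using smooth_diff sV oU pU by blast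
    have nN: "\<And>u. gmet G p N (D phi w u) = 0" using tv w p_def N_def by simp
    have DGsym: "\<And>h. transpose (D G p h) = D G p h" using DG_sym[OF assms(1) pU] by blast
    have A: "gmet G p (amb_hess G phi w u v) N = - f p * gmet G p (D phi w u) (D phi w v)" for u v
    proof -
      define X where "X = D phi w u"
      define Y where "Y = D phi w v"
      define D2 where "D2 = D (\<lambda>w'. D phi w' v) w u"
      have dV: "(V has_derivative D V p) (at p)" using D_has dVd by blast
      have dG: "(G has_derivative D G p) (at p)" using D_has dGd by blast
      have dp: "(phi has_derivative D phi w) (at w)" using D_has dphi by blast
      have dY: "((\<lambda>w'. D phi w' v) has_derivative D (\<lambda>w'. D phi w' v) w) (at w)"
        using D_has smooth_diff2 sphi oW w by blast
      have dVc: "((\<lambda>w'. V (phi w')) has_derivative (\<lambda>h. D V p (D phi w h))) (at w)"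
        using has_derivative_compose[OF dp] dV p_def by blast
      have dGc: "((\<lambda>w'. G (phi w')) has_derivative (\<lambda>h. D G p (D phi w h))) (at w)"
        using has_derivative_compose[OF dp] dG p_def by blast
      have dM: "((\<lambda>w'. G (phi w') *v D phi w' v) has_derivative
          (\<lambda>h. G (phi w) *v D (\<lambda>w'. D phi w' v) w h + D G p (D phi w h) *v D phi w v)) (at w)"
        using bounded_bilinear.FDERIV[OF bb_mv dGc dY] by simp
      have dh: "((\<lambda>w'. V (phi w') \<bullet> (G (phi w') *v D phi w' v)) has_derivative
          (\<lambda>h. V (phi w) \<bullet> (G (phi w) *v D (\<lambda>w'. D phi w' v) w h + D G p (D phi w h) *v D phi w v)
             + D V p (D phi w h) \<bullet> (G (phi w) *v D phi w v))) (at w)"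
        using has_derivative_inner[OF dVc dM] by simp
      have dh0: "((\<lambda>w'. V (phi w') \<bullet> (G (phi w') *v D phi w' v)) has_derivative (\<lambda>h. 0)) (at w)"
      proof (rule has_derivative_transform_within_open[OF has_derivative_const oW w])
        fix w' assume "w' \<in> W"
        then show "0 = V (phi w') \<bullet> (G (phi w') *v D phi w' v)" using tv[of w' v] unfolding gmet_def by simp
      qed
      have "(\<lambda>h. V (phi w) \<bullet> (G (phi w) *v D (\<lambda>w'. D phi w' v) w h + D G p (D phi w h) *v D phi w v)
             + D V p (D phi w h) \<bullet> (G (phi w) *v D phi w v)) = (\<lambda>h. 0)"
        using has_derivative_unique[OF dh dh0] .
      from fun_cong[OF this, of u]
      have E0: "N \<bullet> (P *v D2) + N \<bullet> (D G p X *v Y) + D V p X \<bullet> (P *v Y) = 0"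
        unfolding N_def P_def X_def Y_def D2_def p_def by (simp add: inner_add_right)
      have gXN: "gmet G p X N = 0" using gsym nN X_def by simp
      have "D V p X + christoffel G p X N = f p *\<^sub>R X"
        using LC[OF pU, of X] gXN unfolding levi_civita_def N_def by simp
      then have DV: "D V p X = f p *\<^sub>R X - christoffel G p X N" by (simp add: algebra_simps)
      have MC: "christoffel G p X N \<bullet> (P *v Y) + christoffel G p X Y \<bullet> (P *v N) = N \<bullet> (D G p X *v Y)"
        using metric_compat[of G p, OF _ _ D_linear[OF dGd] DGsym] Psym Pinv P_def by blast
      have S2: "D2 \<bullet> (P *v N) = N \<bullet> (P *v D2)" using sym_inner[OF Psym] by blast
      have "gmet G p (amb_hess G phi w u v) N = (D2 + christoffel G p X Y) \<bullet> (P *v N)"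
        unfolding amb_hess_def gmet_def p_def[symmetric] P_def[symmetric] D2_def X_def Y_def ..
      also have "\<dots> = - f p * (X \<bullet> (P *v Y))"
        using E0 MC S2 unfolding DV by (simp add: inner_add_left inner_diff_left algebra_simps)
      finally show ?thesis unfolding gmet_def P_def X_def Y_def .
    qed
    define L where "L = (\<lambda>u. P *v D phi w u)"
    have linL: "linear L" unfolding L_def using linear_compose[OF linD matrix_vector_mul_linear[of P]]
      by (simp add: o_def)
    have injL: "inj L"
    proof (rule injI)
      fix x y assume "L x = L y"
      then have "P *v (D phi w x - D phi w y) = 0" unfolding L_def
        by (simp add: matrix_vector_mult_diff_distrib)
      then have "D phi w x = D phi w y" using Pinj[of "D phi w x - D phi w y"] by simp
      then show "x = y" using injD[OF w] by (simp add: inj_eq)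
    qed
    define C where "C = {y \<in> UNIV. \<forall>x \<in> range L. orthogonal x y}"
    have subC: "subspace C" unfolding C_def using subspace_orthogonal_to_vectors[of "range L"] by simp
    have "dim C + dim (range L) = dim (UNIV :: (real^'n) set)"
      unfolding C_def by (rule dim_subspace_orthogonal_to_vectors)
        (auto intro: linear_subspace_image[OF linL subspace_UNIV])
    moreover have "dim (range L) = dim (UNIV :: (real^'m) set)"
      using dim_image_eq[OF linL] injL by (metis inj_on_subset subset_UNIV)
    ultimately have dC: "dim C = 1" using card by simp
    have inC: "\<And>y. (\<forall>u. gmet G p y (D phi w u) = 0) \<Longrightarrow> y \<in> C"
      unfolding C_def L_def orthogonal_def
      using gsym unfolding gmet_def P_def[symmetric] by (auto simp: inner_commute)
    have NC: "N \<in> C" using inC nN by blast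
    have \<xi>C: "\<xi> \<in> C" using inC \<xi> unfolding normal_vec_def p_def by blast
    have "span {N} = span C" by (rule dim_eq_span) (use NC dC N0 in auto)
    then have "\<xi> \<in> span {N}" using \<xi>C span_base by metis
    then obtain c where c: "\<xi> = c *\<^sub>R N" using span_singleton by (auto simp: scalar_mult_eq_scaleR)
    define Gr where "Gr = (\<chi> i j. gmet G p (D phi w (axis i 1)) (D phi w (axis j 1)) :: real^'m^'m)"
    have gl1: "linear (\<lambda>e. gmet G p a (D phi w e))" for a
      unfolding gmet_def by (intro linearI) (simp_all add: linear_add[OF linD] linear_scale[OF linD]
        matrix_vector_right_distrib matrix_vector_mult_scaleR inner_add_right)
    have gl2: "linear (\<lambda>e. gmet G p (D phi w e) a)" for a
      unfolding gmet_def by (intro linearI) (simp_all add: linear_add[OF linD] linear_scale[OF linD]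
        inner_add_left)
    have Grv: "(Gr *v x) $ i = gmet G p (D phi w (axis i 1)) (D phi w x)" for x i
      unfolding Gr_def matrix_vector_mult_def using lin_expand[OF gl1] by (simp add: mult.commute)
    have Grq: "x \<bullet> (Gr *v x) = gmet G p (D phi w x) (D phi w x)" for x
      unfolding inner_vec_def Grv using lin_expand[OF gl2] by simp
    have Grinj: "\<And>x. Gr *v x = 0 \<Longrightarrow> x = 0"
    proof -
      fix x assume "Gr *v x = 0"
      then have "gmet G p (D phi w x) (D phi w x) = 0" using Grq[of x] by simp
      then have "D phi w x = 0" using pd[OF pU] unfolding gmet_def by (metis less_irrefl)
      moreover have "D phi w 0 = 0" using linear_0[OF linD] .
      ultimately show "x = 0" using injD[OF w] by (metis inj_eq)
    qed
    have Grinv: "matrix_inv Gr ** Gr = mat 1" using inv_props[OF Grinj] by blast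
    have Bm: "(\<chi> i j. gmet G (phi w) (amb_hess G phi w (axis i 1) (axis j 1)) \<xi>) = (c * - f p) *\<^sub>R Gr"
      unfolding p_def[symmetric] Gr_def c using A
      by (simp add: vec_eq_iff gmet_def matrix_vector_mult_scaleR)
    show "\<exists>\<mu>. \<forall>u. shape_op G phi w \<xi> u = \<mu> *\<^sub>R u"
    proof (intro exI allI)
      fix u
      have "shape_op G phi w \<xi> u = matrix_inv Gr *v ((c * - f p) *\<^sub>R (Gr *v u))"
        unfolding shape_op_def Bm scale_mv unfolding p_def Gr_def ..
      also have "\<dots> = (c * - f p) *\<^sub>R u"
        by (simp only: matrix_vector_mult_scaleR matrix_vector_mul_assoc Grinv matrix_vector_mul_lid)
      finally show "shape_op G phi w \<xi> u = (c * - f p) *\<^sub>R u" .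
    qed
  qed
qed

end
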